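(* Let $\alpha$ be irrational whose continued fraction partial quotients are bounded in average. Then the Sós permutations $\beta_\alpha$ of $[n]$ satisfy $D(\beta_\alpha)=O(\log n)$ as $n\to\infty$ (implicit constant depending on $\alpha$).
   Context: $[n]=\{1,\dots,n\}$, identified with $\mathbb{Z}_n$; $\{x\}$ is the fractional part of $x$. For irrational $\alpha$, $\beta_\alpha$ is the permutation of $[n]$ with $\beta_\alpha(t)=|\{s\in[n]:\{\alpha s\}\le\{\alpha t\}\}|$. If $\alpha=[a_0;a_1,a_2,\dots]$, its partial quotients are bounded in average if there is $B$ with $a_1+\dots+a_m\le Bm$ for all $m\ge1$. An interval of $\mathbb{Z}_n$ is any subset that is the image of an interval of consecutive integers under the projection $\mathbb{Z}\to\mathbb{Z}_n$ (wrap-around allowed). For $S,T\subseteq\mathbb{Z}_n$, $D_T(S)=\bigl|\,|S\cap T|-|S||T|/n\,\bigr|$, and $D(\sigma)=\max_{I,J}D_J(\sigma(I))$ over all intervals $I,J$. *)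

theory Defs
  imports Complex_Main "HOL-Library.Landau_Symbols"
begin

text \<open>Continued fraction expansion alpha = [a0; a1, a2, ...]:
  complete quotients x_0 = alpha, x_(k+1) = 1 / frac(x_k); partial quotients a_k = floor(x_k).\<close>
fun cf_rem :: "real \<Rightarrow> nat \<Rightarrow> real" where
  "cf_rem x 0 = x"
| "cf_rem x (Suc k) = 1 / frac (cf_rem x k)"

definition cf_quot :: "real \<Rightarrow> nat \<Rightarrow> int" where
  "cf_quot x k = floor (cf_rem x k)"

definition pq_bounded_in_average :: "real \<Rightarrow> bool" where
  "pq_bounded_in_average x \<longleftrightarrow>
     (\<exists>B::real. \<forall>m\<ge>1. real_of_int (\<Sum>k=1..m. cf_quot x k) \<le> B * real m)"

definition sos_perm :: "real \<Rightarrow> nat \<Rightarrow> nat \<Rightarrow> nat" where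
  "sos_perm \<alpha> n t = card {s \<in> {1..n}. frac (\<alpha> * real s) \<le> frac (\<alpha> * real t)}"

text \<open>Intervals of Z_n, with [n] identified with Z_n via t \<mapsto> t mod n:
  images of {a, a+1, ..., a+L-1} (wrap-around allowed), represented inside {1..n}.
  Every interval arises with a < n and L \<le> n (L = 0 gives the empty set).\<close>
definition zn_intervals :: "nat \<Rightarrow> nat set set" where
  "zn_intervals n = {{(a + i) mod n + 1 | i. i < L} | a L. a < n \<and> L \<le> n}"

definition disc_set :: "nat \<Rightarrow> nat set \<Rightarrow> nat set \<Rightarrow> real" where
  "disc_set n T S = \<bar>real (card (S \<inter> T)) - real (card S) * real (card T) / real n\<bar>"

definition perm_disc :: "nat \<Rightarrow> (nat \<Rightarrow> nat) \<Rightarrow> real" where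
  "perm_disc n \<sigma> = Max {disc_set n J (\<sigma> ` I) | I J. I \<in> zn_intervals n \<and> J \<in> zn_intervals n}"

end

theory Submission
  imports Defs
begin

fun cfP :: "real \<Rightarrow> nat \<Rightarrow> int" where
  "cfP a 0 = 1"
| "cfP a (Suc 0) = cf_quot a 0"
| "cfP a (Suc (Suc k)) = cf_quot a (Suc k) * cfP a (Suc k) + cfP a k"

fun cfQ :: "real \<Rightarrow> nat \<Rightarrow> nat" where
  "cfQ a 0 = 0"
| "cfQ a (Suc 0) = 1"
| "cfQ a (Suc (Suc k)) = nat (cf_quot a (Suc k)) * cfQ a (Suc k) + cfQ a k"

lemma irrat_inv_frac:
  assumes "(y::real) \<notin> \<rat>" shows "1 / frac y \<notin> \<rat>"
proof
  assume "1 / frac y \<in> \<rat>"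
  then have "frac y \<in> \<rat>"
    by (metis Rats_inverse inverse_eq_divide inverse_inverse_eq)
  then have "y \<in> \<rat>" unfolding frac_def
    by (metis Rats_add Rats_of_int diff_add_cancel)
  then show False using assms by simp
qed

lemma cf_rem_irrat:
  assumes "\<alpha> \<notin> \<rat>" shows "cf_rem \<alpha> k \<notin> \<rat>"
proof (induction k)
  case 0 then show ?case using assms by simp
next
  case (Suc k)
  have "cf_rem \<alpha> (Suc k) = 1 / frac (cf_rem \<alpha> k)" by simp
  then show ?case using irrat_inv_frac[OF Suc] by metis
qed

lemma frac_pos_irrat:
  assumes "(y::real) \<notin> \<rat>" shows "frac y > 0"
proof -
  have "frac y \<noteq> 0" using assms frac_eq_0_iff Ints_subset_Rats by blast
  then show ?thesis using frac_ge_0 by (simp add: order_less_le)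
qed

lemma cf_rem_gt1:
  assumes "\<alpha> \<notin> \<rat>" shows "cf_rem \<alpha> (Suc k) > 1"
proof -
  have "frac (cf_rem \<alpha> k) > 0" using frac_pos_irrat cf_rem_irrat assms by blast
  moreover have "frac (cf_rem \<alpha> k) < 1" by (rule frac_lt_1)
  ultimately show ?thesis by simp
qed

lemma cf_quot_pos:
  assumes "\<alpha> \<notin> \<rat>" shows "cf_quot \<alpha> (Suc k) \<ge> 1"
  using cf_rem_gt1[OF assms, of k] unfolding cf_quot_def
  by (simp add: le_floor_iff)

lemma cf_rem_step:
  assumes "\<alpha> \<notin> \<rat>"
  shows "cf_rem \<alpha> k = cf_quot \<alpha> k + 1 / cf_rem \<alpha> (Suc k)"
  using frac_pos_irrat[OF cf_rem_irrat[OF assms, of k]]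
  by (simp add: cf_quot_def frac_def)

lemma cfQ_int:
  assumes "\<alpha> \<notin> \<rat>"
  shows "int (cfQ \<alpha> (Suc (Suc k))) = cf_quot \<alpha> (Suc k) * int (cfQ \<alpha> (Suc k)) + int (cfQ \<alpha> k)"
  using cf_quot_pos[OF assms, of k] by simp

lemma cfQ_pos_mono: "\<alpha> \<notin> \<rat> \<Longrightarrow> cfQ \<alpha> (Suc k) \<ge> 1 \<and> cfQ \<alpha> k \<le> cfQ \<alpha> (Suc k)"
proof (induction k)
  case 0 then show ?case by simp
next
  case (Suc k)
  have "cf_quot \<alpha> (Suc k) \<ge> 1" using cf_quot_pos[OF Suc.prems] .
  then have n1: "nat (cf_quot \<alpha> (Suc k)) \<ge> 1" by simp
  have e: "cfQ \<alpha> (Suc (Suc k)) = nat (cf_quot \<alpha> (Suc k)) * cfQ \<alpha> (Suc k) + cfQ \<alpha> k" by simp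
  have "cfQ \<alpha> (Suc k) \<le> nat (cf_quot \<alpha> (Suc k)) * cfQ \<alpha> (Suc k)"
    using n1 by (metis mult_1 mult_le_mono1)
  then have "cfQ \<alpha> (Suc k) \<le> cfQ \<alpha> (Suc (Suc k))" using e by linarith
  then show ?case using Suc by linarith
qed

lemma cfQ_pos: "\<alpha> \<notin> \<rat> \<Longrightarrow> cfQ \<alpha> (Suc k) \<ge> 1"
  using cfQ_pos_mono by blast

lemma cfQ_mono_step: "\<alpha> \<notin> \<rat> \<Longrightarrow> cfQ \<alpha> k \<le> cfQ \<alpha> (Suc k)"
  using cfQ_pos_mono by blast

lemma cfQ_bound_step:
  assumes "\<alpha> \<notin> \<rat>"
  shows "cfQ \<alpha> (Suc (Suc k)) \<le> (nat (cf_quot \<alpha> (Suc k)) + 1) * cfQ \<alpha> (Suc k)"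
  using cfQ_mono_step[OF assms, of k] by simp

lemma cfQ_exp: "\<alpha> \<notin> \<rat> \<Longrightarrow> cfQ \<alpha> (2 * j + 1) \<ge> 2 ^ j"
proof (induction j)
  case 0 then show ?case by simp
next
  case (Suc j)
  define m where "m = 2 * j + 1"
  have "nat (cf_quot \<alpha> (Suc m)) \<ge> 1" using cf_quot_pos[OF Suc.prems, of m] by simp
  then have A: "cfQ \<alpha> (Suc m) \<le> nat (cf_quot \<alpha> (Suc m)) * cfQ \<alpha> (Suc m)" by simp
  have B: "cfQ \<alpha> m \<le> cfQ \<alpha> (Suc m)" using cfQ_mono_step[OF Suc.prems] .
  have C: "cfQ \<alpha> (Suc (Suc m)) = nat (cf_quot \<alpha> (Suc m)) * cfQ \<alpha> (Suc m) + cfQ \<alpha> m" by simp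
  have "cfQ \<alpha> (Suc (Suc m)) \<ge> 2 * cfQ \<alpha> m" using A B C by linarith
  moreover have "2 * Suc j + 1 = Suc (Suc m)" unfolding m_def by simp
  ultimately show ?case using Suc unfolding m_def by simp
qed

lemma cf_det:
  assumes "\<alpha> \<notin> \<rat>"
  shows "cfP \<alpha> (Suc k) * int (cfQ \<alpha> k) - cfP \<alpha> k * int (cfQ \<alpha> (Suc k)) = (-1) ^ (Suc k)"
proof (induction k)
  case 0 then show ?case by simp
next
  case (Suc k)
  have "cfP \<alpha> (Suc (Suc k)) * int (cfQ \<alpha> (Suc k)) - cfP \<alpha> (Suc k) * int (cfQ \<alpha> (Suc (Suc k)))
      = -(cfP \<alpha> (Suc k) * int (cfQ \<alpha> k) - cfP \<alpha> k * int (cfQ \<alpha> (Suc k)))"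
    unfolding cfQ_int[OF assms] cfP.simps by (simp add: algebra_simps)
  then show ?case using Suc by simp
qed

lemma cf_coprime:
  assumes "\<alpha> \<notin> \<rat>"
  shows "coprime (cfP \<alpha> (Suc k)) (int (cfQ \<alpha> (Suc k)))"
proof (rule coprimeI)
  fix c assume c1: "c dvd cfP \<alpha> (Suc k)" and c2: "c dvd int (cfQ \<alpha> (Suc k))"
  have "c dvd cfP \<alpha> (Suc k) * int (cfQ \<alpha> k) - cfP \<alpha> k * int (cfQ \<alpha> (Suc k))"
    using c1 c2 by (simp add: dvd_diff)
  then have "c dvd (-1) ^ Suc k" using cf_det[OF assms] by simp
  moreover have "is_unit ((-1::int) ^ Suc k)" by (simp add: is_unit_power_iff)
  ultimately show "is_unit c" using dvd_unit_imp_unit by blast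
qed

lemma cf_ident:
  assumes "\<alpha> \<notin> \<rat>"
  shows "\<alpha> * (real (cfQ \<alpha> (Suc k)) * cf_rem \<alpha> (Suc k) + real (cfQ \<alpha> k))
         = real_of_int (cfP \<alpha> (Suc k)) * cf_rem \<alpha> (Suc k) + real_of_int (cfP \<alpha> k)"
proof (induction k)
  case 0
  have f: "frac \<alpha> > 0" using frac_pos_irrat[OF assms] .
  have x1: "cf_rem \<alpha> (Suc 0) = 1 / frac \<alpha>" by simp
  have a: "\<alpha> = real_of_int (cf_quot \<alpha> 0) + frac \<alpha>" by (simp add: cf_quot_def frac_def)
  show ?case unfolding x1 using f by (subst a) (simp add: field_simps)
next
  case (Suc k)
  define y where "y = cf_rem \<alpha> (Suc (Suc k))"
  define a where "a = real_of_int (cf_quot \<alpha> (Suc k))"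
  have y1: "y > 1" unfolding y_def using cf_rem_gt1[OF assms] .
  have st: "cf_rem \<alpha> (Suc k) = a + 1 / y" unfolding y_def a_def using cf_rem_step[OF assms] .
  have q2: "real (cfQ \<alpha> (Suc (Suc k))) = a * real (cfQ \<alpha> (Suc k)) + real (cfQ \<alpha> k)"
    unfolding a_def using cfQ_int[OF assms, of k] by (metis of_int_add of_int_mult of_int_of_nat_eq)
  have p2: "real_of_int (cfP \<alpha> (Suc (Suc k))) = a * real_of_int (cfP \<alpha> (Suc k)) + real_of_int (cfP \<alpha> k)"
    unfolding a_def by simp
  have "\<alpha> * (real (cfQ \<alpha> (Suc k)) * (a + 1/y) + real (cfQ \<alpha> k))
         = real_of_int (cfP \<alpha> (Suc k)) * (a + 1/y) + real_of_int (cfP \<alpha> k)"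
    using Suc.IH unfolding st .
  then have E: "y * (\<alpha> * (real (cfQ \<alpha> (Suc k)) * (a + 1/y) + real (cfQ \<alpha> k)))
         = y * (real_of_int (cfP \<alpha> (Suc k)) * (a + 1/y) + real_of_int (cfP \<alpha> k))" by simp
  have yy: "y * (1/y) = 1" using y1 by simp
  have L: "y * (\<alpha> * (real (cfQ \<alpha> (Suc k)) * (a + 1/y) + real (cfQ \<alpha> k)))
     = \<alpha> * ((a * real (cfQ \<alpha> (Suc k)) + real (cfQ \<alpha> k)) * y + real (cfQ \<alpha> (Suc k)) * (y * (1/y)))"
    by (simp add: algebra_simps)
  have R: "y * (real_of_int (cfP \<alpha> (Suc k)) * (a + 1/y) + real_of_int (cfP \<alpha> k))
     = (a * real_of_int (cfP \<alpha> (Suc k)) + real_of_int (cfP \<alpha> k)) * y + real_of_int (cfP \<alpha> (Suc k)) * (y * (1/y))"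
    by (simp add: algebra_simps)
  have "\<alpha> * ((a * real (cfQ \<alpha> (Suc k)) + real (cfQ \<alpha> k)) * y + real (cfQ \<alpha> (Suc k)))
        = (a * real_of_int (cfP \<alpha> (Suc k)) + real_of_int (cfP \<alpha> k)) * y + real_of_int (cfP \<alpha> (Suc k))"
    using E unfolding L R yy by simp
  then show ?case unfolding y_def[symmetric] q2 p2 by simp
qed

lemma cf_approx:
  assumes "\<alpha> \<notin> \<rat>"
  shows "\<bar>real (cfQ \<alpha> (Suc k)) * \<alpha> - real_of_int (cfP \<alpha> (Suc k))\<bar> \<le> 1 / real (cfQ \<alpha> (Suc k))"
proof -
  define y where "y = cf_rem \<alpha> (Suc k)"
  define q where "q = real (cfQ \<alpha> (Suc k))"
  define q0 where "q0 = real (cfQ \<alpha> k)"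
  define p where "p = real_of_int (cfP \<alpha> (Suc k))"
  define p0 where "p0 = real_of_int (cfP \<alpha> k)"
  have y1: "y > 1" unfolding y_def using cf_rem_gt1[OF assms] .
  have q1: "q \<ge> 1" unfolding q_def using cfQ_pos[OF assms, of k] by simp
  have q00: "q0 \<ge> 0" unfolding q0_def by simp
  have id: "\<alpha> * (q * y + q0) = p * y + p0" unfolding q_def y_def q0_def p_def p0_def using cf_ident[OF assms] .
  have det: "p * q0 - p0 * q = (-1) ^ Suc k" unfolding p_def q0_def p0_def q_def
    using arg_cong[OF cf_det[OF assms, of k], of real_of_int] by simp
  have "(q * \<alpha> - p) * (q * y + q0) = q * (\<alpha> * (q * y + q0)) - p * (q * y + q0)" by (simp add: algebra_simps)
  also have "\<dots> = - (p * q0 - p0 * q)" unfolding id by (simp add: algebra_simps)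
  finally have e0: "\<bar>(q * \<alpha> - p) * (q * y + q0)\<bar> = 1" using det by simp
  have "q * y \<ge> q * 1" using y1 q1 by (intro mult_left_mono) auto
  then have D: "q * y + q0 \<ge> q" using q00 by linarith
  have e: "\<bar>q * \<alpha> - p\<bar> * (q * y + q0) = 1" using e0 D q1 unfolding abs_mult by simp
  have "\<bar>q * \<alpha> - p\<bar> = 1 / (q * y + q0)" using e D q1 by (simp add: field_simps)
  also have "\<dots> \<le> 1 / q" using D q1 by (simp add: frac_le)
  finally show ?thesis unfolding q_def p_def .
qed

lemma divsum_aux: "(q::nat) > 0 \<Longrightarrow> (\<Sum>i<q. (N + int i) div int q) = N"
proof (induction N rule: int_induct[where k=0])
  case base
  have "(\<Sum>i<q. (0 + int i) div int q) = (\<Sum>i<q. 0::int)"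
    by (intro sum.cong) auto
  then show ?case by simp
next
  case (step1 i)
  let ?f = "\<lambda>j::nat. (i + int j) div int q"
  have s1: "(\<Sum>j<Suc q. ?f j) = ?f 0 + (\<Sum>j<q. ?f (Suc j))" by (rule sum.lessThan_Suc_shift)
  have s2: "(\<Sum>j<Suc q. ?f j) = (\<Sum>j<q. ?f j) + ?f q" by simp
  have "?f q = ?f 0 + 1" using step1 by (simp add: div_add_self2)
  moreover have "(\<Sum>j<q. (i + 1 + int j) div int q) = (\<Sum>j<q. ?f (Suc j))" by (simp add: add_ac)
  ultimately show ?case using s1 s2 step1 by simp
next
  case (step2 i)
  let ?f = "\<lambda>j::nat. (i - 1 + int j) div int q"
  have s1: "(\<Sum>j<Suc q. ?f j) = ?f 0 + (\<Sum>j<q. ?f (Suc j))" by (rule sum.lessThan_Suc_shift)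
  have s2: "(\<Sum>j<Suc q. ?f j) = (\<Sum>j<q. ?f j) + ?f q" by simp
  have "?f q = ?f 0 + 1" using step2 by (simp add: div_add_self2)
  moreover have "(\<Sum>j<q. (i + int j) div int q) = (\<Sum>j<q. ?f (Suc j))" by (simp add: add_ac)
  ultimately show ?case using s1 s2 step2 by simp
qed

lemma floor_shift_div:
  fixes u :: real assumes q: "(q::nat) > 0"
  shows "floor (u + real i / real q) = (floor (real q * u) + int i) div int q"
proof -
  define N where "N = floor (real q * u)"
  define m where "m = (N + int i) div int q"
  have N1: "real_of_int N \<le> real q * u" "real q * u < real_of_int N + 1" unfolding N_def by linarith+
  have dm: "m * int q + (N + int i) mod int q = N + int i" unfolding m_def by (rule div_mult_mod_eq)
  have b1: "(N + int i) mod int q \<ge> 0" "(N + int i) mod int q < int q" using q by simp_all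
  have m1: "m * int q \<le> N + int i" "N + int i + 1 \<le> m * int q + int q" using dm b1 by linarith+
  have m1r: "real_of_int m * real q \<le> real_of_int N + real i" "real_of_int N + real i + 1 \<le> real_of_int m * real q + real q"
  proof -
    have "real_of_int (m * int q) \<le> real_of_int (N + int i)" using m1(1) by (simp only: of_int_le_iff)
    then show "real_of_int m * real q \<le> real_of_int N + real i" by simp
    have "real_of_int (N + int i + 1) \<le> real_of_int (m * int q + int q)" using m1(2) by (simp only: of_int_le_iff)
    then show "real_of_int N + real i + 1 \<le> real_of_int m * real q + real q" by simp
  qed
  have qr: "real q > 0" using q by simp
  have "u + real i / real q = (real q * u + real i) / real q" using qr by (simp add: field_simps)
  have lo: "real_of_int m \<le> u + real i / real q"
  proof -
    have "real_of_int m * real q \<le> real q * u + real i" using m1r N1 by linarith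
    then show ?thesis using qr by (simp add: field_simps)
  qed
  have hi: "u + real i / real q < real_of_int m + 1"
  proof -
    have "real q * u + real i < real_of_int m * real q + real q" using m1r N1 by linarith
    then show ?thesis using qr by (simp add: field_simps)
  qed
  show ?thesis unfolding N_def[symmetric] m_def[symmetric] using lo hi by (simp add: floor_eq_iff)
qed

lemma hermite:
  fixes u :: real assumes q: "(q::nat) > 0"
  shows "(\<Sum>i<q. floor (u + real i / real q)) = floor (real q * u)"
  using divsum_aux[OF q] floor_shift_div[OF q] by simp

lemma mod_perm_bij:
  assumes q: "(q::nat) > 0" and cop: "coprime p (int q)"
  shows "bij_betw (\<lambda>j. nat ((int j * p) mod int q)) {..<q} {..<q}"
proof -
  let ?g = "\<lambda>j. nat ((int j * p) mod int q)"
  have inj: "inj_on ?g {..<q}"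
  proof
    fix j j' assume j: "j \<in> {..<q}" and j': "j' \<in> {..<q}" and e: "?g j = ?g j'"
    have "(int j * p) mod int q \<ge> 0" "(int j' * p) mod int q \<ge> 0" using q by simp_all
    then have "(int j * p) mod int q = (int j' * p) mod int q" using e
      by (simp add: eq_nat_nat_iff)
    then have "int q dvd (int j * p - int j' * p)" by (simp add: mod_eq_dvd_iff)
    then have "int q dvd ((int j - int j') * p)" by (simp add: algebra_simps)
    then have d: "int q dvd (int j - int j')"
      using cop by (metis coprime_commute coprime_dvd_mult_left_iff)
    have "\<bar>int j - int j'\<bar> < int q" using j j' by auto
    show "j = j'"
    proof (rule ccontr)
      assume "j \<noteq> j'"
      then have "int j - int j' \<noteq> 0" by simp
      from dvd_imp_le_int[OF this d] have "int q \<le> \<bar>int j - int j'\<bar>" by simp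
      then show False using \<open>\<bar>int j - int j'\<bar> < int q\<close> by simp
    qed
  qed
  have img: "?g ` {..<q} \<subseteq> {..<q}"
  proof
    fix y assume "y \<in> ?g ` {..<q}"
    then obtain j where y: "y = ?g j" by auto
    have "(int j * p) mod int q < int q" using q by simp
    moreover have "(int j * p) mod int q \<ge> 0" using q by simp
    ultimately show "y \<in> {..<q}" using y by (simp add: nat_less_iff)
  qed
  have "?g ` {..<q} = {..<q}" using endo_inj_surj[OF _ img inj] by simp
  then show ?thesis using inj unfolding bij_betw_def by simp
qed

lemma grid_sum:
  fixes u :: real
  assumes q: "(q::nat) > 0" and cop: "coprime p (int q)"
  shows "(\<Sum>j<q. floor (u + real j * real_of_int p / real q))
         = floor (real q * u) + (\<Sum>j<q. (int j * p) div int q)"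
proof -
  let ?g = "\<lambda>j. nat ((int j * p) mod int q)"
  have each: "floor (u + real j * real_of_int p / real q) = floor (u + real (?g j) / real q) + (int j * p) div int q" for j
  proof -
    have m0: "(int j * p) mod int q \<ge> 0" using q by simp
    have "real_of_int (int j * p) = real_of_int ((int j * p) div int q) * real q + real_of_int ((int j * p) mod int q)"
      by (metis div_mult_mod_eq of_int_add of_int_mult of_int_of_nat_eq)
    then have "real j * real_of_int p / real q = real (?g j) / real q + real_of_int ((int j * p) div int q)"
      using q m0 by (simp add: field_simps)
    then have "u + real j * real_of_int p / real q = (u + real (?g j) / real q) + real_of_int ((int j * p) div int q)"
      by simp
    then have "floor (u + real j * real_of_int p / real q) = floor ((u + real (?g j) / real q) + real_of_int ((int j * p) div int q))"
      by (rule arg_cong)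
    also have "\<dots> = floor (u + real (?g j) / real q) + (int j * p) div int q"
      by (rule floor_add_int[symmetric])
    finally show ?thesis .
  qed
  have "(\<Sum>j<q. floor (u + real j * real_of_int p / real q))
      = (\<Sum>j<q. floor (u + real (?g j) / real q)) + (\<Sum>j<q. (int j * p) div int q)"
    unfolding each by (simp add: sum.distrib)
  moreover have "(\<Sum>j<q. floor (u + real (?g j) / real q)) = (\<Sum>i<q. floor (u + real i / real q))"
    using sum.reindex_bij_betw[OF mod_perm_bij[OF q cop], of "\<lambda>i. floor (u + real i / real q)"] by simp
  ultimately show ?thesis using hermite[OF q] by simp
qed

lemma ind_floor:
  fixes y x :: real assumes "0 \<le> x" "x \<le> 1"
  shows "(if frac y < x then 1 else 0) = real_of_int (floor y - floor (y - x))"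
proof (cases "frac y < x")
  case True
  have "floor (y - x) = floor y - 1"
    using True assms unfolding frac_def by (simp add: floor_eq_iff) linarith
  then show ?thesis using True by simp
next
  case False
  have "floor (y - x) = floor y"
    using False assms unfolding frac_def by (simp add: floor_eq_iff) linarith
  then show ?thesis using False by simp
qed

lemma pert_sum:
  fixes u \<alpha> :: real
  assumes q: "(q::nat) > 0" and cop: "coprime p (int q)"
    and ap: "\<bar>real q * \<alpha> - real_of_int p\<bar> \<le> 1 / real q"
  shows "floor (real q * u) + (\<Sum>j<q. (int j * p) div int q) - 1 \<le> (\<Sum>j<q. floor (u + real j * \<alpha>))
       \<and> (\<Sum>j<q. floor (u + real j * \<alpha>)) \<le> floor (real q * u) + (\<Sum>j<q. (int j * p) div int q) + 1"
proof -
  define K where "K = (\<Sum>j<q. (int j * p) div int q)"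
  define \<delta> where "\<delta> = real q * \<alpha> - real_of_int p"
  have qr: "real q > 0" using q by simp
  have G: "\<And>v. (\<Sum>j<q. floor (v + real j * real_of_int p / real q)) = floor (real q * v) + K"
    unfolding K_def using grid_sum[OF q cop] .
  have dec: "u + real j * \<alpha> = u + real j * real_of_int p / real q + real j * \<delta> / real q" for j
    unfolding \<delta>_def using qr by (simp add: field_simps)
  have jd: "\<bar>real j * \<delta> / real q\<bar> \<le> 1 / real q" if "j < q" for j
  proof -
    have "\<bar>real j * \<delta>\<bar> \<le> real q * \<bar>\<delta>\<bar>" using that by (simp add: abs_mult mult_right_mono)
    also have "\<dots> \<le> real q * (1 / real q)" using ap unfolding \<delta>_def by (intro mult_left_mono) simp_all
    also have "\<dots> = 1" using qr by simp
    finally have "\<bar>real j * \<delta>\<bar> \<le> 1" .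
    then have "\<bar>real j * \<delta>\<bar> / real q \<le> 1 / real q" using qr by (intro divide_right_mono) auto
    then show ?thesis using qr by (simp add: abs_div)
  qed
  have sq1: "floor (real q * (u + 1 / real q)) = floor (real q * u) + 1"
  proof -
    have "real q * (u + 1 / real q) = real q * u + 1" using qr by (simp add: field_simps)
    then show ?thesis by simp
  qed
  have sq2: "floor (real q * (u - 1 / real q)) = floor (real q * u) - 1"
  proof -
    have "real q * (u - 1 / real q) = real q * u - 1" using qr by (simp add: field_simps)
    then show ?thesis by simp
  qed
  show ?thesis
  proof (cases "\<delta> \<ge> 0")
    case True
    have lo: "(\<Sum>j<q. floor (u + real j * real_of_int p / real q)) \<le> (\<Sum>j<q. floor (u + real j * \<alpha>))"
    proof (rule sum_mono)
      fix j assume "j \<in> {..<q}"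
      have "real j * \<delta> / real q \<ge> 0" using True by simp
      then show "floor (u + real j * real_of_int p / real q) \<le> floor (u + real j * \<alpha>)"
        unfolding dec by (intro floor_mono) linarith
    qed
    have hi: "(\<Sum>j<q. floor (u + real j * \<alpha>)) \<le> (\<Sum>j<q. floor ((u + 1 / real q) + real j * real_of_int p / real q))"
    proof (rule sum_mono)
      fix j assume "j \<in> {..<q}"
      then have "\<bar>real j * \<delta> / real q\<bar> \<le> 1 / real q" using jd by simp
      then have "real j * \<delta> / real q \<le> 1 / real q" by linarith
      then show "floor (u + real j * \<alpha>) \<le> floor ((u + 1 / real q) + real j * real_of_int p / real q)"
        unfolding dec by (intro floor_mono) linarith
    qed
    show ?thesis using lo hi G[of u] G[of "u + 1 / real q"] sq1 unfolding K_def by linarith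
  next
    case False
    have hi: "(\<Sum>j<q. floor (u + real j * \<alpha>)) \<le> (\<Sum>j<q. floor (u + real j * real_of_int p / real q))"
    proof (rule sum_mono)
      fix j assume "j \<in> {..<q}"
      have "real j * \<delta> / real q \<le> 0" using False by (simp add: divide_nonpos_nonneg mult_nonneg_nonpos)
      then show "floor (u + real j * \<alpha>) \<le> floor (u + real j * real_of_int p / real q)"
        unfolding dec by (intro floor_mono) linarith
    qed
    have lo: "(\<Sum>j<q. floor ((u - 1 / real q) + real j * real_of_int p / real q)) \<le> (\<Sum>j<q. floor (u + real j * \<alpha>))"
    proof (rule sum_mono)
      fix j assume "j \<in> {..<q}"
      then have "\<bar>real j * \<delta> / real q\<bar> \<le> 1 / real q" using jd by simp
      then have "real j * \<delta> / real q \<ge> - (1 / real q)" using abs_le_D2 by (metis minus_le_iff)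
      then show "floor ((u - 1 / real q) + real j * real_of_int p / real q) \<le> floor (u + real j * \<alpha>)"
        unfolding dec by (intro floor_mono) linarith
    qed
    show ?thesis using lo hi G[of u] G[of "u - 1 / real q"] sq2 unfolding K_def by linarith
  qed
qed

lemma block:
  fixes \<alpha> c x :: real
  assumes q: "(q::nat) > 0" and cop: "coprime p (int q)"
    and ap: "\<bar>real q * \<alpha> - real_of_int p\<bar> \<le> 1 / real q"
    and x: "0 \<le> x" "x \<le> 1"
  shows "\<bar>(\<Sum>j<q. if frac (c + real j * \<alpha>) < x then 1 else 0) - real q * x\<bar> \<le> 3"
proof -
  define K where "K = (\<Sum>j<q. (int j * p) div int q)"
  have e: "(\<Sum>j<q. if frac (c + real j * \<alpha>) < x then 1 else (0::real))
      = real_of_int ((\<Sum>j<q. floor (c + real j * \<alpha>)) - (\<Sum>j<q. floor ((c - x) + real j * \<alpha>)))"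
  proof -
    have "(\<Sum>j<q. if frac (c + real j * \<alpha>) < x then 1 else (0::real))
       = (\<Sum>j<q. real_of_int (floor (c + real j * \<alpha>) - floor ((c - x) + real j * \<alpha>)))"
      using ind_floor[OF x] by (intro sum.cong) (auto simp: algebra_simps)
    then show ?thesis by (simp add: sum_subtractf)
  qed
  define S1 where "S1 = (\<Sum>j<q. floor (c + real j * \<alpha>))"
  define S2 where "S2 = (\<Sum>j<q. floor ((c - x) + real j * \<alpha>))"
  have P1: "floor (real q * c) + K - 1 \<le> S1" "S1 \<le> floor (real q * c) + K + 1"
    using pert_sum[OF q cop ap, of c] unfolding S1_def K_def by auto
  have P2: "floor (real q * (c - x)) + K - 1 \<le> S2" "S2 \<le> floor (real q * (c - x)) + K + 1"
    using pert_sum[OF q cop ap, of "c - x"] unfolding S2_def K_def by auto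
  have D: "S1 - S2 \<le> floor (real q * c) - floor (real q * (c - x)) + 2"
          "floor (real q * c) - floor (real q * (c - x)) - 2 \<le> S1 - S2" using P1 P2 by linarith+
  have Dr: "real_of_int (S1 - S2) \<le> real_of_int (floor (real q * c)) - real_of_int (floor (real q * (c - x))) + 2"
           "real_of_int (floor (real q * c)) - real_of_int (floor (real q * (c - x))) - 2 \<le> real_of_int (S1 - S2)"
  proof -
    have "real_of_int (S1 - S2) \<le> real_of_int (floor (real q * c) - floor (real q * (c - x)) + 2)"
      using D(1) by (simp only: of_int_le_iff)
    then show "real_of_int (S1 - S2) \<le> real_of_int (floor (real q * c)) - real_of_int (floor (real q * (c - x))) + 2" by simp
    have "real_of_int (floor (real q * c) - floor (real q * (c - x)) - 2) \<le> real_of_int (S1 - S2)"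
      using D(2) by (simp only: of_int_le_iff)
    then show "real_of_int (floor (real q * c)) - real_of_int (floor (real q * (c - x))) - 2 \<le> real_of_int (S1 - S2)" by simp
  qed
  have f1: "real q * c - 1 < real_of_int (floor (real q * c))" "real_of_int (floor (real q * c)) \<le> real q * c" by linarith+
  have f2: "real q * (c - x) - 1 < real_of_int (floor (real q * (c - x)))" "real_of_int (floor (real q * (c - x))) \<le> real q * (c - x)" by linarith+
  have "real q * (c - x) = real q * c - real q * x" by (simp add: algebra_simps)
  then have "\<bar>real_of_int (S1 - S2) - real q * x\<bar> \<le> 3" using Dr f1 f2 by linarith
  then show ?thesis unfolding e S1_def S2_def .
qed

definition Cn :: "real \<Rightarrow> nat \<Rightarrow> nat \<Rightarrow> real \<Rightarrow> real" where
  "Cn \<alpha> a L x = (\<Sum>j<L. if frac (\<alpha> * real (a + j)) < x then 1 else 0)"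

lemma Cn_add: "Cn \<alpha> a (L1 + L2) x = Cn \<alpha> a L1 x + Cn \<alpha> (a + L1) L2 x"
proof (induction L2)
  case 0 then show ?case by (simp add: Cn_def)
next
  case (Suc L2)
  then show ?case by (simp add: Cn_def add.assoc)
qed

lemma Cn_block:
  assumes irr: "\<alpha> \<notin> \<rat>" and x: "0 \<le> x" "x \<le> 1"
  shows "\<bar>Cn \<alpha> a (cfQ \<alpha> (Suc k)) x - real (cfQ \<alpha> (Suc k)) * x\<bar> \<le> 3"
proof -
  have q: "cfQ \<alpha> (Suc k) > 0" using cfQ_pos[OF irr, of k] by simp
  have e: "Cn \<alpha> a (cfQ \<alpha> (Suc k)) x = (\<Sum>j<cfQ \<alpha> (Suc k). if frac (\<alpha> * real a + real j * \<alpha>) < x then 1 else 0)"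
    unfolding Cn_def by (intro sum.cong) (auto simp: algebra_simps)
  show ?thesis unfolding e
    by (rule block[OF q cf_coprime[OF irr] cf_approx[OF irr] x])
qed

lemma Cn_mult:
  assumes irr: "\<alpha> \<notin> \<rat>" and x: "0 \<le> x" "x \<le> 1"
  shows "\<bar>Cn \<alpha> a (m * cfQ \<alpha> (Suc k)) x - real (m * cfQ \<alpha> (Suc k)) * x\<bar> \<le> 3 * real m"
proof (induction m arbitrary: a)
  case 0 then show ?case by (simp add: Cn_def)
next
  case (Suc m)
  let ?q = "cfQ \<alpha> (Suc k)"
  have "Cn \<alpha> a (Suc m * ?q) x = Cn \<alpha> a (m * ?q) x + Cn \<alpha> (a + m * ?q) ?q x"
    using Cn_add[of \<alpha> a "m * ?q" ?q x] by (simp add: add.commute)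
  moreover have "\<bar>Cn \<alpha> (a + m * ?q) ?q x - real ?q * x\<bar> \<le> 3" by (rule Cn_block[OF irr x])
  moreover have "real (Suc m * ?q) * x = real (m * ?q) * x + real ?q * x" by (simp add: algebra_simps)
  ultimately show ?case using Suc.IH[of a] by simp
qed

lemma Cn_range:
  assumes irr: "\<alpha> \<notin> \<rat>" and x: "0 \<le> x" "x \<le> 1"
  shows "L < cfQ \<alpha> (Suc k) \<Longrightarrow> \<bar>Cn \<alpha> a L x - real L * x\<bar> \<le> 3 * real_of_int (\<Sum>i=1..k. cf_quot \<alpha> i)"
proof (induction k arbitrary: a L)
  case 0 then show ?case by (simp add: Cn_def)
next
  case (Suc k)
  let ?q = "cfQ \<alpha> (Suc k)"
  let ?A = "nat (cf_quot \<alpha> (Suc k))"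
  have q: "?q > 0" using cfQ_pos[OF irr, of k] by simp
  define m where "m = L div ?q"
  define r where "r = L mod ?q"
  have Lmr: "L = m * ?q + r" unfolding m_def r_def by (rule div_mult_mod_eq[symmetric])
  have r: "r < ?q" unfolding r_def using q by simp
  have "L < (?A + 1) * ?q" using Suc.prems cfQ_bound_step[OF irr, of k] by simp
  then have mA: "m \<le> ?A" unfolding m_def
    by (metis less_Suc_eq_le less_mult_imp_div_less Suc_eq_plus1)
  have A1: "cf_quot \<alpha> (Suc k) \<ge> 1" using cf_quot_pos[OF irr] .
  have mAr: "real m \<le> real_of_int (cf_quot \<alpha> (Suc k))"
  proof -
    have "int m \<le> int ?A" using mA by (simp only: of_nat_le_iff)
    then have "int m \<le> cf_quot \<alpha> (Suc k)" using A1 by simp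
    then show ?thesis by (metis of_int_le_iff of_int_of_nat_eq)
  qed
  have sp: "Cn \<alpha> a L x = Cn \<alpha> a (m * ?q) x + Cn \<alpha> (a + m * ?q) r x"
    unfolding Lmr by (rule Cn_add)
  have b1: "\<bar>Cn \<alpha> a (m * ?q) x - real (m * ?q) * x\<bar> \<le> 3 * real m" by (rule Cn_mult[OF irr x])
  have b2: "\<bar>Cn \<alpha> (a + m * ?q) r x - real r * x\<bar> \<le> 3 * real_of_int (\<Sum>i=1..k. cf_quot \<alpha> i)"
    using Suc.IH r by simp
  have "real L * x = real (m * ?q) * x + real r * x" unfolding Lmr by (simp add: algebra_simps)
  then have "\<bar>Cn \<alpha> a L x - real L * x\<bar> \<le> 3 * real m + 3 * real_of_int (\<Sum>i=1..k. cf_quot \<alpha> i)"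
    using sp b1 b2 by linarith
  also have "\<dots> \<le> 3 * real_of_int (\<Sum>i=1..Suc k. cf_quot \<alpha> i)"
    using mAr by simp
  finally show ?case .
qed

lemma sum_split_lt: fixes A B :: nat shows "(\<Sum>i<A + B. g i) = (\<Sum>i<A. g i) + (\<Sum>i<B. g (A + i))"
  by (induction B) (simp_all add: add.assoc)

lemma card_filter_sum:
  assumes "finite A" shows "real (card {x \<in> A. P x}) = (\<Sum>x\<in>A. if P x then 1 else 0)"
proof -
  have "real (card {x \<in> A. P x}) = (\<Sum>x\<in>{x \<in> A. P x}. (1::real))" by simp
  also have "\<dots> = (\<Sum>x\<in>A. if P x then 1 else 0)" by (rule sum.inter_filter[OF assms])
  finally show ?thesis .
qed

lemma frac_distinct:
  assumes irr: "\<alpha> \<notin> \<rat>" and st: "(s::nat) \<noteq> t"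
  shows "frac (\<alpha> * real s) \<noteq> frac (\<alpha> * real t)"
proof
  assume e: "frac (\<alpha> * real s) = frac (\<alpha> * real t)"
  have "\<alpha> * (real s - real t) = real_of_int (floor (\<alpha> * real s) - floor (\<alpha> * real t))"
    using e unfolding frac_def by (simp add: algebra_simps)
  moreover have "real s - real t \<noteq> 0" using st by simp
  ultimately have "\<alpha> = real_of_int (floor (\<alpha> * real s) - floor (\<alpha> * real t)) / (real s - real t)"
    by (simp add: field_simps)
  moreover have "real_of_int (floor (\<alpha> * real s) - floor (\<alpha> * real t)) / (real s - real t) \<in> \<rat>"
    by (intro Rats_divide Rats_diff) simp_all
  ultimately show False using irr by simp
qed

lemma modf:
  assumes "(a::nat) < n" "i < n"
  shows "(a + i) mod n = (if a + i < n then a + i else a + i - n)"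
proof (cases "a + i < n")
  case True then show ?thesis by simp
next
  case False
  then have "(a + i) mod n = (a + i - n) mod n" by (simp add: le_mod_geq)
  also have "\<dots> = a + i - n" using assms by simp
  finally show ?thesis using False by simp
qed

context
  fixes \<alpha> :: real and n :: nat
  assumes irr: "\<alpha> \<notin> \<rat>" and n1: "n \<ge> 1"
begin

abbreviation "\<sigma> \<equiv> sos_perm \<alpha> n"

lemma sig_le: "t \<in> {1..n} \<Longrightarrow> frac (\<alpha> * real s) \<le> frac (\<alpha> * real t) \<Longrightarrow> \<sigma> s \<le> \<sigma> t"
  unfolding sos_perm_def by (intro card_mono) auto

lemma sig_lt:
  assumes t: "t \<in> {1..n}" and lt: "frac (\<alpha> * real s) < frac (\<alpha> * real t)"
  shows "\<sigma> s < \<sigma> t"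
proof -
  let ?A = "{u \<in> {1..n}. frac (\<alpha> * real u) \<le> frac (\<alpha> * real s)}"
  let ?B = "{u \<in> {1..n}. frac (\<alpha> * real u) \<le> frac (\<alpha> * real t)}"
  have "?A \<subseteq> ?B" using lt by auto
  moreover have "t \<in> ?B" "t \<notin> ?A" using t lt by auto
  ultimately have "?A \<subset> ?B" by blast
  then have "card ?A < card ?B" by (intro psubset_card_mono) auto
  then show ?thesis unfolding sos_perm_def .
qed

lemma sig_range: "s \<in> {1..n} \<Longrightarrow> \<sigma> s \<in> {1..n}"
proof -
  assume s: "s \<in> {1..n}"
  have "\<sigma> s \<le> card {1..n}" unfolding sos_perm_def by (intro card_mono) auto
  moreover have "\<sigma> s \<ge> 1"
  proof -
    have "{s} \<subseteq> {t \<in> {1..n}. frac (\<alpha> * real t) \<le> frac (\<alpha> * real s)}" using s by auto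
    then have "card {s} \<le> \<sigma> s" unfolding sos_perm_def by (intro card_mono) auto
    then show ?thesis by simp
  qed
  ultimately show ?thesis by simp
qed

lemma sig_inj: "inj_on \<sigma> {1..n}"
proof
  fix s t assume s: "s \<in> {1..n}" and t: "t \<in> {1..n}" and e: "\<sigma> s = \<sigma> t"
  show "s = t"
  proof (rule ccontr)
    assume "s \<noteq> t"
    then have "frac (\<alpha> * real s) \<noteq> frac (\<alpha> * real t)" using frac_distinct[OF irr] by blast
    then have "frac (\<alpha> * real s) < frac (\<alpha> * real t) \<or> frac (\<alpha> * real t) < frac (\<alpha> * real s)" by linarith
    then show False using sig_lt s t e by fastforce
  qed
qed

lemma sig_img: "\<sigma> ` {1..n} = {1..n}"
  by (rule endo_inj_surj) (use sig_range sig_inj in auto)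

lemma thresh:
  assumes r: "r \<le> n"
  shows "\<exists>x. 0 \<le> x \<and> x \<le> 1 \<and> (\<forall>s\<in>{1..n}. \<sigma> s \<le> r \<longleftrightarrow> frac (\<alpha> * real s) < x)"
proof (cases "r = n")
  case True
  then show ?thesis using sig_range frac_lt_1 by (intro exI[of _ 1]) auto
next
  case False
  then have "r + 1 \<in> {1..n}" using r by simp
  then obtain s' where s': "s' \<in> {1..n}" "\<sigma> s' = r + 1" using sig_img by (metis imageE)
  show ?thesis
  proof (intro exI[of _ "frac (\<alpha> * real s')"] conjI ballI)
    show "0 \<le> frac (\<alpha> * real s')" by (rule frac_ge_0)
    show "frac (\<alpha> * real s') \<le> 1" using frac_lt_1 less_imp_le by blast
    fix s assume s: "s \<in> {1..n}"
    show "\<sigma> s \<le> r \<longleftrightarrow> frac (\<alpha> * real s) < frac (\<alpha> * real s')"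
    proof
      assume "\<sigma> s \<le> r"
      then show "frac (\<alpha> * real s) < frac (\<alpha> * real s')" using sig_le[OF s, of s'] s' by fastforce
    next
      assume "frac (\<alpha> * real s) < frac (\<alpha> * real s')"
      then show "\<sigma> s \<le> r" using sig_lt[OF s'(1)] s' by fastforce
    qed
  qed
qed

lemma card_le_r:
  assumes r: "r \<le> n" shows "card {s \<in> {1..n}. \<sigma> s \<le> r} = r"
proof -
  have "\<sigma> ` {s \<in> {1..n}. \<sigma> s \<le> r} = {1..r}"
  proof
    show "\<sigma> ` {s \<in> {1..n}. \<sigma> s \<le> r} \<subseteq> {1..r}" using sig_range by fastforce
    show "{1..r} \<subseteq> \<sigma> ` {s \<in> {1..n}. \<sigma> s \<le> r}"
    proof
      fix t assume t: "t \<in> {1..r}"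
      then have "t \<in> \<sigma> ` {1..n}" using sig_img r by auto
      then obtain s where "s \<in> {1..n}" "\<sigma> s = t" by auto
      then show "t \<in> \<sigma> ` {s \<in> {1..n}. \<sigma> s \<le> r}" using t by auto
    qed
  qed
  moreover have "inj_on \<sigma> {s \<in> {1..n}. \<sigma> s \<le> r}" using sig_inj by (rule inj_on_subset) auto
  ultimately show ?thesis using card_image by fastforce
qed

end

lemma zn_inj:
  assumes "(a::nat) < n" "L \<le> n"
  shows "inj_on (\<lambda>i. (a + i) mod n + 1) {..<L}"
proof
  fix i j assume i: "i \<in> {..<L}" and j: "j \<in> {..<L}" and e: "(a + i) mod n + 1 = (a + j) mod n + 1"
  have "i < n" "j < n" using i j assms by auto
  then show "i = j" using e modf[OF assms(1)] by (auto split: if_splits)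
qed

lemma zn_range:
  assumes "(a::nat) < n" shows "(a + i) mod n + 1 \<in> {1..n}"
  using assms by (simp add: Suc_leI)

lemma zn_mem:
  assumes b: "(b::nat) < n" and M: "M \<le> n" and t: "t \<in> {1..n}"
  shows "t \<in> {(b + i) mod n + 1 | i. i < M} \<longleftrightarrow> (b < t \<and> t \<le> b + M) \<or> t + n \<le> b + M"
proof
  assume "t \<in> {(b + i) mod n + 1 | i. i < M}"
  then obtain i where i: "i < M" "t = (b + i) mod n + 1" by auto
  then have "i < n" using M by simp
  then show "(b < t \<and> t \<le> b + M) \<or> t + n \<le> b + M" using i modf[OF b] by (auto split: if_splits)
next
  assume h: "(b < t \<and> t \<le> b + M) \<or> t + n \<le> b + M"
  show "t \<in> {(b + i) mod n + 1 | i. i < M}"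
  proof (cases "b < t \<and> t \<le> b + M")
    case True
    define i where "i = t - 1 - b"
    have "i < M" "i < n" "b + i < n" using True t M unfolding i_def by auto
    moreover have "(b + i) mod n + 1 = t" using True t modf[OF b \<open>i < n\<close>] \<open>b + i < n\<close> unfolding i_def by auto
    ultimately show ?thesis by blast
  next
    case False
    then have h2: "t + n \<le> b + M" using h by blast
    define i where "i = t + n - 1 - b"
    have "i < M" "i < n" "\<not> b + i < n" using h2 t b M unfolding i_def by auto
    moreover have "(b + i) mod n + 1 = t" using h2 t b modf[OF b \<open>i < n\<close>] \<open>\<not> b + i < n\<close> unfolding i_def by auto
    ultimately show ?thesis by blast
  qed
qed

context
  fixes \<alpha> :: real and n :: nat and E :: real
  assumes irr: "\<alpha> \<notin> \<rat>" and n1: "n \<ge> 1"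
    and HE: "\<And>a L x. L \<le> n \<Longrightarrow> 0 \<le> x \<Longrightarrow> x \<le> 1 \<Longrightarrow> \<bar>Cn \<alpha> a L x - real L * x\<bar> \<le> E"
begin

lemma E0: "E \<ge> 0"
  using HE[of 0 0 0] by (simp add: Cn_def)

lemma Isum:
  assumes a: "a < n" and L: "L \<le> n" and x: "0 \<le> x" "x \<le> 1"
  shows "\<bar>(\<Sum>i<L. if frac (\<alpha> * real ((a + i) mod n + 1)) < x then 1 else 0) - real L * x\<bar> \<le> 2 * E"
proof (cases "a + L \<le> n")
  case True
  have "(\<Sum>i<L. if frac (\<alpha> * real ((a + i) mod n + 1)) < x then 1 else 0) = Cn \<alpha> (a + 1) L x"
    unfolding Cn_def
  proof (intro sum.cong refl)
    fix i assume "i \<in> {..<L}"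
    then have "(a + i) mod n + 1 = a + 1 + i" using True by simp
    then show "(if frac (\<alpha> * real ((a + i) mod n + 1)) < x then 1 else 0) =
      (if frac (\<alpha> * real (a + 1 + i)) < x then 1 else (0::real))" by simp
  qed
  moreover have "\<bar>Cn \<alpha> (a + 1) L x - real L * x\<bar> \<le> E" using HE[OF L x] .
  ultimately show ?thesis using E0 by linarith
next
  case False
  define L2 where "L2 = L - (n - a)"
  have LL: "L = (n - a) + L2" unfolding L2_def using False by simp
  let ?h = "\<lambda>i. if frac (\<alpha> * real ((a + i) mod n + 1)) < x then 1 else (0::real)"
  have "(\<Sum>i<L. ?h i) = (\<Sum>i<n - a. ?h i) + (\<Sum>i<L2. ?h (n - a + i))"
    unfolding LL by (rule sum_split_lt)
  also have "(\<Sum>i<n - a. ?h i) = Cn \<alpha> (a + 1) (n - a) x"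
    unfolding Cn_def
  proof (intro sum.cong refl)
    fix i assume "i \<in> {..<n - a}"
    then have "(a + i) mod n + 1 = a + 1 + i" by simp
    then show "?h i = (if frac (\<alpha> * real (a + 1 + i)) < x then 1 else (0::real))" by simp
  qed
  also have "(\<Sum>i<L2. ?h (n - a + i)) = Cn \<alpha> 1 L2 x"
    unfolding Cn_def
  proof (intro sum.cong refl)
    fix i assume "i \<in> {..<L2}"
    then have "i < n" using L LL by simp
    then have "(a + (n - a + i)) mod n + 1 = 1 + i" using a by simp
    then show "?h (n - a + i) = (if frac (\<alpha> * real (1 + i)) < x then 1 else (0::real))" by simp
  qed
  finally have s: "(\<Sum>i<L. ?h i) = Cn \<alpha> (a + 1) (n - a) x + Cn \<alpha> 1 L2 x" .
  have b1: "\<bar>Cn \<alpha> (a + 1) (n - a) x - real (n - a) * x\<bar> \<le> E" using HE x by simp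
  have b2: "\<bar>Cn \<alpha> 1 L2 x - real L2 * x\<bar> \<le> E" using HE x L LL by simp
  have "real L * x = real (n - a) * x + real L2 * x" unfolding LL by (simp add: algebra_simps)
  then show ?thesis using s b1 b2 by linarith
qed

lemma Fbound:
  assumes a: "a < n" and L: "L \<le> n" and r: "r \<le> n"
  shows "\<bar>(\<Sum>i<L. if sos_perm \<alpha> n ((a + i) mod n + 1) \<le> r then 1 else 0) - real L * real r / real n\<bar> \<le> 3 * E"
proof -
  obtain x where x: "0 \<le> x" "x \<le> 1" and thr: "\<forall>s\<in>{1..n}. sos_perm \<alpha> n s \<le> r \<longleftrightarrow> frac (\<alpha> * real s) < x"
    using thresh[OF irr n1 r] by blast
  have "(\<Sum>i<L. if sos_perm \<alpha> n ((a + i) mod n + 1) \<le> r then 1 else 0)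
      = (\<Sum>i<L. if frac (\<alpha> * real ((a + i) mod n + 1)) < x then 1 else (0::real))"
    using thr zn_range[OF a] by (intro sum.cong) auto
  then have b1: "\<bar>(\<Sum>i<L. if sos_perm \<alpha> n ((a + i) mod n + 1) \<le> r then 1 else 0) - real L * x\<bar> \<le> 2 * E"
    using Isum[OF a L x] by simp
  have "real r = real (card {s \<in> {1..n}. sos_perm \<alpha> n s \<le> r})" using card_le_r[OF irr n1 r] by simp
  also have "\<dots> = (\<Sum>s\<in>{1..n}. if sos_perm \<alpha> n s \<le> r then 1 else 0)" by (rule card_filter_sum) simp
  also have "\<dots> = (\<Sum>s\<in>{1..n}. if frac (\<alpha> * real s) < x then 1 else 0)"
    using thr by (intro sum.cong) auto
  also have "\<dots> = Cn \<alpha> 1 n x" unfolding Cn_def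
    by (simp add: sum.atLeast1_atMost_eq)
  finally have b2: "\<bar>real r - real n * x\<bar> \<le> E" using HE[OF order.refl x, of 1] x by simp
  have nr: "real n > 0" using n1 by simp
  have "real L * real r / real n - real L * x = (real L / real n) * (real r - real n * x)"
    using nr by (simp add: field_simps)
  then have "\<bar>real L * real r / real n - real L * x\<bar> = (real L / real n) * \<bar>real r - real n * x\<bar>"
    by (simp add: abs_mult)
  also have "\<dots> \<le> 1 * E"
    using L nr b2 E0 by (intro mult_mono) (auto simp: field_simps)
  finally show ?thesis using b1 by linarith
qed

end

lemma J_decomp:
  assumes b: "(b::nat) < n" and M: "M \<le> n"
  obtains r1 r2 r3 where "r1 \<le> n" "r2 \<le> n" "r3 \<le> n" "real M = real r2 - real r1 + real r3"
    "\<And>t. t \<in> {1..n} \<Longrightarrow> (if t \<in> {(b + i) mod n + 1 | i. i < M} then 1 else 0)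
        = (if t \<le> r2 then 1 else 0) - (if t \<le> r1 then 1 else 0) + (if t \<le> r3 then 1 else (0::real))"
proof (cases "b + M \<le> n")
  case True
  show ?thesis
  proof (rule that[of b "b + M" 0])
    fix t assume t: "t \<in> {1..n}"
    show "(if t \<in> {(b + i) mod n + 1 | i. i < M} then 1 else 0)
        = (if t \<le> b + M then 1 else 0) - (if t \<le> b then 1 else 0) + (if t \<le> 0 then 1 else (0::real))"
      unfolding zn_mem[OF b M t] using True t by auto
  qed (use True b in auto)
next
  case False
  show ?thesis
  proof (rule that[of b n "b + M - n"])
    fix t assume t: "t \<in> {1..n}"
    show "(if t \<in> {(b + i) mod n + 1 | i. i < M} then 1 else 0)
        = (if t \<le> n then 1 else 0) - (if t \<le> b then 1 else 0) + (if t \<le> b + M - n then 1 else (0::real))"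
      unfolding zn_mem[OF b M t] using False t M by auto
  qed (use False b M in auto)
qed

context
  fixes \<alpha> :: real and n :: nat and E :: real
  assumes irr: "\<alpha> \<notin> \<rat>" and n1: "n \<ge> 1"
    and HE: "\<And>a L x. L \<le> n \<Longrightarrow> 0 \<le> x \<Longrightarrow> x \<le> 1 \<Longrightarrow> \<bar>Cn \<alpha> a L x - real L * x\<bar> \<le> E"
begin

lemma disc_bound:
  assumes a: "a < n" and L: "L \<le> n" and b: "b < n" and M: "M \<le> n"
  shows "disc_set n {(b + i) mod n + 1 | i. i < M} (sos_perm \<alpha> n ` {(a + i) mod n + 1 | i. i < L}) \<le> 9 * E"
proof -
  define f where "f = (\<lambda>i. (a + i) mod n + 1)"
  define g where "g = (\<lambda>i. (b + i) mod n + 1)"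
  define J where "J = {(b + i) mod n + 1 | i. i < M}"
  let ?s = "sos_perm \<alpha> n"
  have Ieq: "{(a + i) mod n + 1 | i. i < L} = f ` {..<L}" unfolding f_def by auto
  have Jeq: "J = g ` {..<M}" unfolding g_def J_def by auto
  have injf: "inj_on f {..<L}" unfolding f_def by (rule zn_inj[OF a L])
  have injg: "inj_on g {..<M}" unfolding g_def by (rule zn_inj[OF b M])
  have fU: "f ` {..<L} \<subseteq> {1..n}" unfolding f_def using zn_range[OF a] by auto
  have injs: "inj_on ?s (f ` {..<L})" using sig_inj[OF irr n1] fU by (rule inj_on_subset)
  have injsf: "inj_on (?s \<circ> f) {..<L}" using injf injs by (rule comp_inj_on)
  have cS: "card (?s ` f ` {..<L}) = L"
    using card_image[OF injsf] by (simp add: image_comp)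
  have cJ: "card J = M" unfolding Jeq using card_image[OF injg] by simp
  have e1: "?s ` f ` {..<L} \<inter> J = (?s \<circ> f) ` {i \<in> {..<L}. ?s (f i) \<in> J}" by auto
  have "inj_on (?s \<circ> f) {i \<in> {..<L}. ?s (f i) \<in> J}" using injsf by (rule inj_on_subset) auto
  then have c0: "card ((?s \<circ> f) ` {i \<in> {..<L}. ?s (f i) \<in> J}) = card {i \<in> {..<L}. ?s (f i) \<in> J}"
    by (rule card_image)
  have cSJ: "card (?s ` f ` {..<L} \<inter> J) = card {i \<in> {..<L}. ?s (f i) \<in> J}"
    using c0 by (simp only: e1)
  have cnt: "real (card (?s ` f ` {..<L} \<inter> J)) = (\<Sum>i<L. if ?s (f i) \<in> J then 1 else 0)"
    unfolding cSJ by (rule card_filter_sum) simp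
  obtain r1 r2 r3 where r: "r1 \<le> n" "r2 \<le> n" "r3 \<le> n" and rM: "real M = real r2 - real r1 + real r3"
    and ind: "\<And>t. t \<in> {1..n} \<Longrightarrow> (if t \<in> J then 1 else 0)
        = (if t \<le> r2 then 1 else 0) - (if t \<le> r1 then 1 else 0) + (if t \<le> r3 then 1 else (0::real))"
    by (fact J_decomp[OF b M, folded J_def])
  define F where "F = (\<lambda>r. (\<Sum>i<L. if ?s (f i) \<le> r then 1 else (0::real)))"
  have FB: "\<bar>F r - real L * real r / real n\<bar> \<le> 3 * E" if "r \<le> n" for r
    unfolding F_def f_def using Fbound[OF irr n1 HE a L that] by simp
  have "(\<Sum>i<L. if ?s (f i) \<in> J then 1 else (0::real))
      = (\<Sum>i<L. (if ?s (f i) \<le> r2 then 1 else 0) - (if ?s (f i) \<le> r1 then 1 else 0) + (if ?s (f i) \<le> r3 then 1 else (0::real)))"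
  proof (intro sum.cong refl)
    fix i assume "i \<in> {..<L}"
    then have "f i \<in> {1..n}" using fU by auto
    then have "?s (f i) \<in> {1..n}" by (rule sig_range[OF irr n1])
    then show "(if ?s (f i) \<in> J then 1 else (0::real)) = (if ?s (f i) \<le> r2 then 1 else 0) - (if ?s (f i) \<le> r1 then 1 else 0) + (if ?s (f i) \<le> r3 then 1 else (0::real))"
      by (rule ind)
  qed
  also have "\<dots> = F r2 - F r1 + F r3" unfolding F_def by (simp add: sum.distrib sum_subtractf)
  finally have cnt2: "real (card (?s ` f ` {..<L} \<inter> J)) = F r2 - F r1 + F r3" using cnt by simp
  have LM: "real L * real M / real n = real L * real r2 / real n - real L * real r1 / real n + real L * real r3 / real n"
    unfolding rM by (simp add: algebra_simps add_divide_distrib diff_divide_distrib)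
  have "disc_set n J (?s ` f ` {..<L}) = \<bar>F r2 - F r1 + F r3 - real L * real M / real n\<bar>"
    unfolding disc_set_def cnt2 cS cJ by simp
  also have "\<dots> \<le> 9 * E" using FB[OF r(1)] FB[OF r(2)] FB[OF r(3)] LM by linarith
  finally show ?thesis unfolding Ieq J_def .
qed

end

lemma zn_finite: "finite (zn_intervals n)"
proof -
  have "zn_intervals n = (\<lambda>(a, L). {(a + i) mod n + 1 | i. i < L}) ` ({..<n} \<times> {..n})"
    unfolding zn_intervals_def by auto
  then show ?thesis by simp
qed

lemma zn_empty: "n \<ge> 1 \<Longrightarrow> {} \<in> zn_intervals n"
  unfolding zn_intervals_def by (intro CollectI exI[of _ 0]) auto

lemma perm_disc_bound:
  assumes irr: "\<alpha> \<notin> \<rat>" and n1: "n \<ge> 1"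
    and HE: "\<And>a L x. L \<le> n \<Longrightarrow> 0 \<le> x \<Longrightarrow> x \<le> 1 \<Longrightarrow> \<bar>Cn \<alpha> a L x - real L * x\<bar> \<le> E"
  shows "0 \<le> perm_disc n (sos_perm \<alpha> n) \<and> perm_disc n (sos_perm \<alpha> n) \<le> 9 * E"
proof -
  define S where "S = {disc_set n J (sos_perm \<alpha> n ` I) | I J. I \<in> zn_intervals n \<and> J \<in> zn_intervals n}"
  have S_eq: "S = (\<lambda>(I, J). disc_set n J (sos_perm \<alpha> n ` I)) ` (zn_intervals n \<times> zn_intervals n)"
    unfolding S_def by auto
  have fin: "finite S" unfolding S_eq using zn_finite by simp
  have d0: "disc_set n {} (sos_perm \<alpha> n ` {}) \<in> S" unfolding S_def using zn_empty[OF n1] by blast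
  have ne: "S \<noteq> {}" using d0 by auto
  have bnd: "\<forall>s\<in>S. s \<le> 9 * E"
  proof
    fix s assume "s \<in> S"
    then obtain I J where s: "s = disc_set n J (sos_perm \<alpha> n ` I)" and I: "I \<in> zn_intervals n" and J: "J \<in> zn_intervals n"
      unfolding S_def by blast
    obtain a L where aL: "a < n" "L \<le> n" "I = {(a + i) mod n + 1 | i. i < L}" using I unfolding zn_intervals_def by blast
    obtain b M where bM: "b < n" "M \<le> n" "J = {(b + i) mod n + 1 | i. i < M}" using J unfolding zn_intervals_def by blast
    show "s \<le> 9 * E" unfolding s aL(3) bM(3) by (rule disc_bound[OF irr n1 HE aL(1,2) bM(1,2)])
  qed
  have "perm_disc n (sos_perm \<alpha> n) = Max S" unfolding perm_disc_def S_def ..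
  moreover have "Max S \<le> 9 * E" using fin ne bnd by simp
  moreover have "0 \<le> Max S"
  proof -
    have "disc_set n {} (sos_perm \<alpha> n ` {}) \<le> Max S" using fin d0 by (rule Max_ge)
    moreover have "0 \<le> disc_set n {} (sos_perm \<alpha> n ` {})" unfolding disc_set_def by simp
    ultimately show ?thesis by linarith
  qed
  ultimately show ?thesis by simp
qed

lemma HE_n:
  assumes irr: "\<alpha> \<notin> \<rat>" and HB: "\<forall>m\<ge>1. real_of_int (\<Sum>k=1..m. cf_quot \<alpha> k) \<le> B * real m"
    and n1: "n \<ge> 1"
  shows "\<And>a L x. L \<le> n \<Longrightarrow> 0 \<le> x \<Longrightarrow> x \<le> 1 \<Longrightarrow>
      \<bar>Cn \<alpha> a L x - real L * x\<bar> \<le> 3 * B * real (2 * nat \<lceil>log 2 (real n + 1)\<rceil>)"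
proof -
  fix a L :: nat and x :: real assume L: "L \<le> n" and x: "0 \<le> x" "x \<le> 1"
  define j where "j = nat \<lceil>log 2 (real n + 1)\<rceil>"
  have "real n + 1 \<le> 2 powr (log 2 (real n + 1))" by simp
  also have "\<dots> \<le> 2 powr (real j)" unfolding j_def by (intro powr_mono) linarith+
  also have "\<dots> = 2 ^ j" by (simp add: powr_realpow)
  finally have "real n + 1 \<le> 2 ^ j" .
  then have "real (n + 1) \<le> real (2 ^ j)" by simp
  then have "n + 1 \<le> 2 ^ j" by (simp only: of_nat_le_iff)
  then have "n < 2 ^ j" by simp
  then have Lq: "L < cfQ \<alpha> (Suc (2 * j))" using cfQ_exp[OF irr, of j] L by simp
  have jpos: "j \<ge> 1"
  proof -
    have "log 2 (real n + 1) > 0" using n1 by simp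
    then show ?thesis unfolding j_def by linarith
  qed
  have "\<bar>Cn \<alpha> a L x - real L * x\<bar> \<le> 3 * real_of_int (\<Sum>i=1..2*j. cf_quot \<alpha> i)"
    by (rule Cn_range[OF irr x Lq])
  also have "\<dots> \<le> 3 * (B * real (2 * j))"
  proof -
    have "2 * j \<ge> 1" using jpos by simp
    then have "real_of_int (\<Sum>i=1..2*j. cf_quot \<alpha> i) \<le> B * real (2 * j)" using HB by blast
    then show ?thesis by simp
  qed
  finally show "\<bar>Cn \<alpha> a L x - real L * x\<bar> \<le> 3 * B * real (2 * nat \<lceil>log 2 (real n + 1)\<rceil>)"
    unfolding j_def by simp
qed

theorem mainTheorem13:
  fixes \<alpha> :: real
  assumes "\<alpha> \<notin> \<rat>"
    and "pq_bounded_in_average \<alpha>"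
  shows "(\<lambda>n. perm_disc n (sos_perm \<alpha> n)) \<in> O(\<lambda>n. ln (real n))"
proof -
  have irr: "\<alpha> \<notin> \<rat>" by fact
  obtain B where HB: "\<forall>m\<ge>1. real_of_int (\<Sum>k=1..m. cf_quot \<alpha> k) \<le> B * real m"
    using assms(2) unfolding pq_bounded_in_average_def by blast
  have B1: "B \<ge> 1"
  proof -
    have "real_of_int (\<Sum>k=1..1. cf_quot \<alpha> k) \<le> B * real (1::nat)" using HB by blast
    moreover have "cf_quot \<alpha> (Suc 0) \<ge> 1" using cf_quot_pos[OF irr, of 0] by simp
    ultimately show ?thesis by simp
  qed
  define C where "C = 54 * B * (2 / ln 2 + 1)"
  show ?thesis
  proof (rule bigoI[where c = C])
    show "\<forall>\<^sub>F n in at_top. norm (perm_disc n (sos_perm \<alpha> n)) \<le> C * norm (ln (real n))"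
      unfolding eventually_at_top_linorder
    proof (intro exI[of _ 3] allI impI)
      fix n :: nat assume n3: "n \<ge> 3"
      then have n1: "n \<ge> 1" by simp
      define j where "j = nat \<lceil>log 2 (real n + 1)\<rceil>"
      have PD: "0 \<le> perm_disc n (sos_perm \<alpha> n) \<and> perm_disc n (sos_perm \<alpha> n) \<le> 9 * (3 * B * real (2 * j))"
        unfolding j_def by (rule perm_disc_bound[OF irr n1 HE_n[OF irr HB n1]])
      have lpos: "log 2 (real n + 1) \<ge> 0" using n1 by simp
      have jb: "real j \<le> log 2 (real n + 1) + 1"
      proof -
        have "real j = real_of_int \<lceil>log 2 (real n + 1)\<rceil>" unfolding j_def using lpos by simp
        then show ?thesis by linarith
      qed
      have nr: "real n \<ge> 3" using n3 by simp
      have ln1: "ln (real n) \<ge> 1"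
      proof -
        have "exp 1 \<le> real n" using exp_le nr by linarith
        then have "ln (exp 1) \<le> ln (real n)" by (intro ln_mono) auto
        then show ?thesis by simp
      qed
      have ln2: "ln (real n + 1) \<le> 2 * ln (real n)"
      proof -
        have "3 * real n \<le> real n * real n" using nr by (intro mult_right_mono) auto
        then have "real n + 1 \<le> real n * real n" using nr by linarith
        then have "ln (real n + 1) \<le> ln (real n * real n)" using nr by (intro ln_mono) auto
        also have "\<dots> = 2 * ln (real n)" using nr by (simp add: ln_mult)
        finally show ?thesis .
      qed
      have l2: "ln (2::real) > 0" by simp
      have "log 2 (real n + 1) = ln (real n + 1) / ln 2" by (simp add: log_def)
      also have "\<dots> \<le> 2 * ln (real n) / ln 2" using ln2 l2 by (intro divide_right_mono) auto
      finally have "real j \<le> 2 * ln (real n) / ln 2 + ln (real n)" using jb ln1 by linarith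
      also have "\<dots> = (2 / ln 2 + 1) * ln (real n)" by (simp add: field_simps)
      finally have jl: "real j \<le> (2 / ln 2 + 1) * ln (real n)" .
      have "perm_disc n (sos_perm \<alpha> n) \<le> 54 * B * real j" using PD by simp
      also have "\<dots> \<le> 54 * B * ((2 / ln 2 + 1) * ln (real n))" using jl B1 by (intro mult_left_mono) auto
      also have "\<dots> = C * ln (real n)" unfolding C_def by simp
      finally show "norm (perm_disc n (sos_perm \<alpha> n)) \<le> C * norm (ln (real n))"
        using PD ln1 by simp
    qed
  qed
qed

end
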